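(* Let $P=\{p_1,\ldots,p_\aleph\}\subset\mathbb{R}^3$ be a finite point set with a connected neighborhood graph (neighborhoods $\mathcal{N}(i)\subset P$), unit normals $n_j$ and weights $\omega_j\geq 0$. Consider the modified variational shape approximation procedure: starting from some partition $P=\dot{\bigcup}_{i=1}^m P_i$ with unit proxy normals $N_i$, repeatedly apply a proxy update step followed by a switch step, stopping when no switch can be performed. Then this procedure terminates after finitely many iterations.
   Context: The error is $E=\sum_{i=1}^m\sum_{p_j\in P_i}\omega_j\|n_j-N_i\|_2^2$. Proxy update step: with the partition fixed, set $N_i=\frac{\sum_{p_j\in P_i}\omega_j n_j}{\left\|\sum_{p_j\in P_i}\omega_j n_j\right\|_2}$ (denominators assumed nonzero). Switch step: with the proxy normals fixed, among all pairs consisting of a point $p_i\in P_\ell$ and a neighbor $p_j\in\mathcal{N}(i)$ with $p_j\in P_h$, $h\neq\ell$, consider reassigning $p_i$ from $P_\ell$ to $P_h$; perform the reassignment that reduces $E$ maximally, provided it strictly reduces $E$. A switch "can be performed" if some such reassignment strictly reduces $E$. *)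

theory Defs
  imports "HOL-Analysis.Analysis"
begin

type_synonym pt = "real ^ 3"

text \<open>A partition of the finite point set P into parts P_0,...,P_(m-1) is encoded by a
label function a : P -> {0..<m}; P_i = {p in P. a p = i}.\<close>

definition part :: "pt set \<Rightarrow> (pt \<Rightarrow> nat) \<Rightarrow> nat \<Rightarrow> pt set" where
  "part P a i = {p \<in> P. a p = i}"

text \<open>Error E = sum_i sum_(p_j in P_i) w_j |n_j - N_i|^2.\<close>
definition vsa_error ::
  "pt set \<Rightarrow> (pt \<Rightarrow> pt) \<Rightarrow> (pt \<Rightarrow> real) \<Rightarrow> (pt \<Rightarrow> nat) \<Rightarrow> (nat \<Rightarrow> pt) \<Rightarrow> real" where
  "vsa_error P n w a N = (\<Sum>p\<in>P. w p * (norm (n p - N (a p)))\<^sup>2)"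

definition weighted_sum :: "pt set \<Rightarrow> (pt \<Rightarrow> pt) \<Rightarrow> (pt \<Rightarrow> real) \<Rightarrow> (pt \<Rightarrow> nat) \<Rightarrow> nat \<Rightarrow> pt" where
  "weighted_sum P n w a i = (\<Sum>p\<in>part P a i. w p *\<^sub>R n p)"

definition proxy_update :: "pt set \<Rightarrow> (pt \<Rightarrow> pt) \<Rightarrow> (pt \<Rightarrow> real) \<Rightarrow> (pt \<Rightarrow> nat) \<Rightarrow> nat \<Rightarrow> pt" where
  "proxy_update P n w a i = (1 / norm (weighted_sum P n w a i)) *\<^sub>R weighted_sum P n w a i"

definition proxy_defined :: "pt set \<Rightarrow> (pt \<Rightarrow> pt) \<Rightarrow> (pt \<Rightarrow> real) \<Rightarrow> nat \<Rightarrow> (pt \<Rightarrow> nat) \<Rightarrow> bool" where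
  "proxy_defined P n w m a = (\<forall>i<m. weighted_sum P n w a i \<noteq> 0)"

definition candidate :: "pt set \<Rightarrow> (pt \<Rightarrow> pt set) \<Rightarrow> (pt \<Rightarrow> nat) \<Rightarrow> (pt \<Rightarrow> nat) \<Rightarrow> bool" where
  "candidate P Nb a a' = (\<exists>pi\<in>P. \<exists>pj\<in>Nb pi. a pj \<noteq> a pi \<and> a' = a(pi := a pj))"

definition switch_step ::
  "pt set \<Rightarrow> (pt \<Rightarrow> pt set) \<Rightarrow> (pt \<Rightarrow> pt) \<Rightarrow> (pt \<Rightarrow> real) \<Rightarrow> (nat \<Rightarrow> pt)
     \<Rightarrow> (pt \<Rightarrow> nat) \<Rightarrow> (pt \<Rightarrow> nat) \<Rightarrow> bool" where
  "switch_step P Nb n w N a a' =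
     (candidate P Nb a a' \<and> vsa_error P n w a' N < vsa_error P n w a N \<and>
      (\<forall>b. candidate P Nb a b \<longrightarrow> vsa_error P n w a' N \<le> vsa_error P n w b N))"

definition vsa_iter ::
  "pt set \<Rightarrow> (pt \<Rightarrow> pt set) \<Rightarrow> (pt \<Rightarrow> pt) \<Rightarrow> (pt \<Rightarrow> real) \<Rightarrow> nat
     \<Rightarrow> (pt \<Rightarrow> nat) \<Rightarrow> (pt \<Rightarrow> nat) \<Rightarrow> bool" where
  "vsa_iter P Nb n w m a a' =
     (proxy_defined P n w m a \<and> switch_step P Nb n w (proxy_update P n w a) a a')"

definition nbh_connected :: "pt set \<Rightarrow> (pt \<Rightarrow> pt set) \<Rightarrow> bool" where
  "nbh_connected P Nb =
     (\<forall>p\<in>P. \<forall>q\<in>P. (p, q) \<in> ({(x, y). x \<in> P \<and> y \<in> Nb x} \<union> {(x, y). x \<in> P \<and> y \<in> Nb x}\<inverse>)\<^sup>*)"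

end

theory Submission
  imports Defs
begin

lemma sq_diff_unit:
  fixes x y :: pt
  assumes "norm x = 1" "norm y = 1"
  shows "(norm (x - y))\<^sup>2 = 2 - 2 * (x \<bullet> y)"
proof -
  have "(norm (x - y))\<^sup>2 = (x - y) \<bullet> (x - y)" by (simp add: power2_norm_eq_inner)
  also have "\<dots> = x \<bullet> x - 2 * (x \<bullet> y) + y \<bullet> y"
    by (simp add: inner_diff_left inner_diff_right inner_commute)
  also have "x \<bullet> x = 1" using assms(1) by (metis power2_norm_eq_inner power_one)
  also have "y \<bullet> y = 1" using assms(2) by (metis power2_norm_eq_inner power_one)
  finally show ?thesis by simp
qed

lemma err_expand:
  assumes "finite P" "\<forall>p\<in>P. norm (n p) = 1" "\<forall>p\<in>P. norm (M (a p)) = 1"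
  shows "vsa_error P n w a M = 2 * (\<Sum>p\<in>P. w p) - 2 * (\<Sum>p\<in>P. w p * (n p \<bullet> M (a p)))"
proof -
  have "vsa_error P n w a M = (\<Sum>p\<in>P. 2 * w p - 2 * (w p * (n p \<bullet> M (a p))))"
    unfolding vsa_error_def
    by (rule sum.cong) (use assms in \<open>auto simp: sq_diff_unit algebra_simps\<close>)
  also have "\<dots> = 2 * (\<Sum>p\<in>P. w p) - 2 * (\<Sum>p\<in>P. w p * (n p \<bullet> M (a p)))"
    by (simp add: sum_subtractf sum_distrib_left)
  finally show ?thesis .
qed

lemma inner_group:
  assumes "finite P" "\<forall>p\<in>P. a p < m"
  shows "(\<Sum>p\<in>P. w p * (n p \<bullet> M (a p))) = (\<Sum>i<m. weighted_sum P n w a i \<bullet> M i)"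
proof -
  have "(\<Sum>p\<in>P. w p * (n p \<bullet> M (a p))) = (\<Sum>i<m. \<Sum>p\<in>{x\<in>P. a x = i}. w p * (n p \<bullet> M (a p)))"
    by (rule sum.group[symmetric]) (use assms in auto)
  also have "\<dots> = (\<Sum>i<m. weighted_sum P n w a i \<bullet> M i)"
    unfolding weighted_sum_def part_def
    by (rule sum.cong) (auto simp: inner_sum_left intro!: sum.cong)
  finally show ?thesis .
qed

lemma proxy_norm:
  assumes "proxy_defined P n w m a" "i < m"
  shows "norm (proxy_update P n w a i) = 1"
  using assms unfolding proxy_defined_def proxy_update_def by simp

lemma proxy_opt:
  assumes "finite P" "\<forall>p\<in>P. norm (n p) = 1" "\<forall>p\<in>P. a p < m"
    "proxy_defined P n w m a" "\<forall>i<m. norm (M i) = 1"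
  shows "vsa_error P n w a (proxy_update P n w a) \<le> vsa_error P n w a M"
proof -
  let ?Q = "proxy_update P n w a"
  have "(\<Sum>i<m. weighted_sum P n w a i \<bullet> M i) \<le> (\<Sum>i<m. weighted_sum P n w a i \<bullet> ?Q i)"
  proof (rule sum_mono)
    fix i assume "i \<in> {..<m}"
    hence "norm (M i) = 1" using assms by auto
    hence "weighted_sum P n w a i \<bullet> M i \<le> norm (weighted_sum P n w a i)"
      using norm_cauchy_schwarz[of "weighted_sum P n w a i" "M i"] by simp
    also have "\<dots> = weighted_sum P n w a i \<bullet> ?Q i"
      unfolding proxy_update_def
      by (simp add: power2_norm_eq_inner[symmetric] power2_eq_square divide_simps)
    finally show "weighted_sum P n w a i \<bullet> M i \<le> weighted_sum P n w a i \<bullet> ?Q i" .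
  qed
  moreover have "vsa_error P n w a ?Q = 2 * (\<Sum>p\<in>P. w p) - 2 * (\<Sum>i<m. weighted_sum P n w a i \<bullet> ?Q i)"
    using err_expand[of P n ?Q a w] inner_group[of P a m w n ?Q] assms proxy_norm by auto
  moreover have "vsa_error P n w a M = 2 * (\<Sum>p\<in>P. w p) - 2 * (\<Sum>i<m. weighted_sum P n w a i \<bullet> M i)"
    using err_expand[of P n M a w] inner_group[of P a m w n M] assms by auto
  ultimately show ?thesis by linarith
qed

theorem mainTheorem2:
  fixes P :: "pt set" and Nb :: "pt \<Rightarrow> pt set" and n :: "pt \<Rightarrow> pt"
    and w :: "pt \<Rightarrow> real" and m :: nat and a0 :: "pt \<Rightarrow> nat" and N0 :: "nat \<Rightarrow> pt"
  assumes "finite P"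
    and "\<forall>p\<in>P. Nb p \<subseteq> P"
    and "nbh_connected P Nb"
    and "\<forall>p\<in>P. norm (n p) = 1"
    and "\<forall>p\<in>P. w p \<ge> 0"
    and "\<forall>p\<in>P. a0 p < m"
    and "\<forall>i<m. norm (N0 i) = 1"
  shows "\<not> (\<exists>s :: nat \<Rightarrow> pt \<Rightarrow> nat. s 0 = a0 \<and> (\<forall>k. vsa_iter P Nb n w m (s k) (s (Suc k))))"
proof
  assume "\<exists>s :: nat \<Rightarrow> pt \<Rightarrow> nat. s 0 = a0 \<and> (\<forall>k. vsa_iter P Nb n w m (s k) (s (Suc k)))"
  then obtain s where s0: "s 0 = a0" and it: "\<And>k. vsa_iter P Nb n w m (s k) (s (Suc k))" by blast
  define S where "S = {f :: pt \<Rightarrow> nat. (\<forall>p. p \<notin> P \<longrightarrow> f p = a0 p) \<and> (\<forall>p\<in>P. f p \<in> a0 ` P)}"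
  have inS: "s k \<in> S" for k
  proof (induction k)
    case 0 then show ?case using s0 unfolding S_def by auto
  next
    case (Suc k)
    from it[of k] obtain pi pj where "pi \<in> P" "pj \<in> Nb pi" "s (Suc k) = (s k)(pi := s k pj)"
      unfolding vsa_iter_def switch_step_def candidate_def by blast
    moreover have "pj \<in> P" using assms(2) calculation by auto
    ultimately show ?case using Suc unfolding S_def by auto
  qed
  have finS: "finite S"
  proof -
    have "inj_on (\<lambda>f. restrict f P) S"
    proof (rule inj_onI)
      fix f g assume "f \<in> S" "g \<in> S" "restrict f P = restrict g P"
      show "f = g"
      proof
        fix x show "f x = g x"
        proof (cases "x \<in> P")
          case True
          then show ?thesis using fun_cong[OF \<open>restrict f P = restrict g P\<close>, of x] by simp
        next
          case False
          then show ?thesis using \<open>f \<in> S\<close> \<open>g \<in> S\<close> unfolding S_def by simp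
        qed
      qed
    qed
    moreover have "(\<lambda>f. restrict f P) ` S \<subseteq> PiE P (\<lambda>_. a0 ` P)" unfolding S_def by auto
    moreover have "finite (PiE P (\<lambda>_. a0 ` P))" using assms(1) by (simp add: finite_PiE)
    ultimately show ?thesis using finite_imageD finite_subset by metis
  qed
  have lab: "\<forall>p\<in>P. s k p < m" for k using inS[of k] assms(6) unfolding S_def by auto
  define F where "F k = vsa_error P n w (s k) (proxy_update P n w (s k))" for k
  have dec: "F (Suc k) < F k" for k
  proof -
    have d1: "proxy_defined P n w m (s k)" and d2: "proxy_defined P n w m (s (Suc k))"
      using it[of k] it[of "Suc k"] unfolding vsa_iter_def by auto
    have "F (Suc k) \<le> vsa_error P n w (s (Suc k)) (proxy_update P n w (s k))"
      unfolding F_def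
      by (rule proxy_opt[OF assms(1) assms(4) lab d2]) (use proxy_norm[OF d1] in auto)
    also have "\<dots> < F k" using it[of k] unfolding F_def vsa_iter_def switch_step_def by auto
    finally show ?thesis .
  qed
  have "strict_mono (\<lambda>k. - F k)" unfolding strict_mono_Suc_iff using dec by auto
  hence "inj (\<lambda>k. - F k)" by (rule strict_mono_imp_inj_on)
  hence "inj s" unfolding inj_def F_def by auto
  hence "infinite (range s)" by (rule range_inj_infinite)
  moreover have "range s \<subseteq> S" using inS by auto
  ultimately show False using finS finite_subset by blast
qed

end
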